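(* Let $\mathcal{Q}=(Q,\leq^Q)$ and $\mathcal{P}=(P,\leq^P)$ be finite posets, $w=\mathrm{width}(\mathcal{P})$, $(C_1,\dots,C_w)$ a chain partition of $\mathcal{P}$, and $f:Q\to\{1,\dots,w\}$. Let $I$ be the CSP instance with domain $P$, one variable $x_q$ for every $q\in Q$ (ranging over $C_{f(q)}$), and, for every pair of distinct $q,q'\in Q$, a constraint $c_{q,q'}$ with scope $(x_q,x_{q'})$ whose relation consists of all pairs $(p,p')$ with $p\in C_{f(q)}$, $p'\in C_{f(q')}$ such that ($p\leq^P p'$ iff $q\leq^Q q'$) and ($p'\leq^P p$ iff $q'\leq^Q q$). Then $I$ is closed under every min polymorphism that is compatible with $\leq^P$, i.e., under the binary operation $\min_{\preceq}$ for any linear order $\preceq$ on $P$ that agrees with $\leq^P$ on each chain $C_i$.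
   Context: A chain partition $(C_1,\dots,C_w)$ of $\mathcal{P}$ is a partition of $P$ into chains (sets of pairwise comparable elements). A CSP instance consists of variables, a finite domain $D$, and constraints each given by a scope (ordered tuple of variables) and a relation on $D$ of matching arity. A $k$-ary relation $R$ is closed under a function $\varphi:D^2\to D$ if for any two tuples $t_1,t_2\in R$ the tuple $(\varphi(t_1[1],t_2[1]),\dots,\varphi(t_1[k],t_2[k]))$ is in $R$; an instance is closed under $\varphi$ if all its constraint relations are. A min polymorphism is a function $\varphi(d,d')=\min\{d,d'\}$ with respect to some linear order of $D$. *)

theory Defs
  imports Main
begin

definition partial_order_on' :: "'a set \<Rightarrow> ('a \<Rightarrow> 'a \<Rightarrow> bool) \<Rightarrow> bool" where
  "partial_order_on' A le \<longleftrightarrow>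
     (\<forall>x\<in>A. le x x) \<and>
     (\<forall>x\<in>A. \<forall>y\<in>A. le x y \<and> le y x \<longrightarrow> x = y) \<and>
     (\<forall>x\<in>A. \<forall>y\<in>A. \<forall>z\<in>A. le x y \<and> le y z \<longrightarrow> le x z)"

definition linear_order_on' :: "'a set \<Rightarrow> ('a \<Rightarrow> 'a \<Rightarrow> bool) \<Rightarrow> bool" where
  "linear_order_on' A le \<longleftrightarrow> partial_order_on' A le \<and> (\<forall>x\<in>A. \<forall>y\<in>A. le x y \<or> le y x)"

definition is_chain :: "('a \<Rightarrow> 'a \<Rightarrow> bool) \<Rightarrow> 'a set \<Rightarrow> bool" where
  "is_chain le C \<longleftrightarrow> (\<forall>x\<in>C. \<forall>y\<in>C. le x y \<or> le y x)"

definition is_antichain :: "('a \<Rightarrow> 'a \<Rightarrow> bool) \<Rightarrow> 'a set \<Rightarrow> bool" where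
  "is_antichain le S \<longleftrightarrow> (\<forall>x\<in>S. \<forall>y\<in>S. x \<noteq> y \<longrightarrow> \<not> le x y)"

definition width :: "'a set \<Rightarrow> ('a \<Rightarrow> 'a \<Rightarrow> bool) \<Rightarrow> nat" where
  "width P le = Max {card S | S. S \<subseteq> P \<and> is_antichain le S}"

definition chain_partition :: "'a set \<Rightarrow> ('a \<Rightarrow> 'a \<Rightarrow> bool) \<Rightarrow> nat \<Rightarrow> (nat \<Rightarrow> 'a set) \<Rightarrow> bool" where
  "chain_partition P le w C \<longleftrightarrow>
     (\<Union>i\<in>{1..w}. C i) = P \<and>
     (\<forall>i\<in>{1..w}. \<forall>j\<in>{1..w}. i \<noteq> j \<longrightarrow> C i \<inter> C j = {}) \<and>
     (\<forall>i\<in>{1..w}. is_chain le (C i))"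

definition min_wrt :: "('a \<Rightarrow> 'a \<Rightarrow> bool) \<Rightarrow> 'a \<Rightarrow> 'a \<Rightarrow> 'a" where
  "min_wrt lin x y = (if lin x y then x else y)"

definition closed_under :: "'a list set \<Rightarrow> ('a \<Rightarrow> 'a \<Rightarrow> 'a) \<Rightarrow> bool" where
  "closed_under R \<phi> \<longleftrightarrow>
     (\<forall>t1\<in>R. \<forall>t2\<in>R. length t1 = length t2 \<longrightarrow> map2 \<phi> t1 t2 \<in> R)"

definition constr_rel ::
  "('q \<Rightarrow> 'q \<Rightarrow> bool) \<Rightarrow> ('p \<Rightarrow> 'p \<Rightarrow> bool) \<Rightarrow> (nat \<Rightarrow> 'p set) \<Rightarrow> ('q \<Rightarrow> nat) \<Rightarrow> 'q \<Rightarrow> 'q \<Rightarrow> 'p list set" where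
  "constr_rel leQ leP C f q q' =
     {[p, p'] | p p'. p \<in> C (f q) \<and> p' \<in> C (f q') \<and>
        (leP p p' \<longleftrightarrow> leQ q q') \<and> (leP p' p \<longleftrightarrow> leQ q' q)}"

text \<open>The instance \<open>I\<close> is closed under \<open>\<phi>\<close>: all its constraint relations
  (the binary constraints \<open>c_{q,q'}\<close> for distinct \<open>q,q'\<close>, and the unary domain
  restrictions \<open>x_q \<in> C_{f(q)}\<close>) are closed under \<open>\<phi>\<close>.\<close>
definition instance_closed ::
  "'q set \<Rightarrow> ('q \<Rightarrow> 'q \<Rightarrow> bool) \<Rightarrow> ('p \<Rightarrow> 'p \<Rightarrow> bool) \<Rightarrow> (nat \<Rightarrow> 'p set) \<Rightarrow> ('q \<Rightarrow> nat) \<Rightarrow> ('p \<Rightarrow> 'p \<Rightarrow> 'p) \<Rightarrow> bool" where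
  "instance_closed Q leQ leP C f \<phi> \<longleftrightarrow>
     (\<forall>q\<in>Q. closed_under {[p] | p. p \<in> C (f q)} \<phi>) \<and>
     (\<forall>q\<in>Q. \<forall>q'\<in>Q. q \<noteq> q' \<longrightarrow> closed_under (constr_rel leQ leP C f q q') \<phi>)"

end

theory Submission
  imports Defs
begin

lemma min_props:
  assumes po: "partial_order_on' P leP" and CP: "Ci \<subseteq> P" and ch: "is_chain leP Ci"
    and ag: "\<forall>p\<in>Ci. \<forall>p'\<in>Ci. lin p p' \<longleftrightarrow> leP p p'"
    and a: "a \<in> Ci" and b: "b \<in> Ci"
  shows "min_wrt lin a b \<in> {a,b} \<and> leP (min_wrt lin a b) a \<and> leP (min_wrt lin a b) b"
proof -
  have ra: "leP a a" "leP b b" using po a b CP unfolding partial_order_on'_def by auto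
  have "leP a b \<or> leP b a" using ch a b unfolding is_chain_def by auto
  thus ?thesis using ra ag a b unfolding min_wrt_def by auto
qed

lemma key:
  assumes po: "partial_order_on' P leP"
    and C1: "C1 \<subseteq> P" "is_chain leP C1" "\<forall>p\<in>C1. \<forall>p'\<in>C1. lin p p' \<longleftrightarrow> leP p p'"
    and C2: "C2 \<subseteq> P" "is_chain leP C2" "\<forall>p\<in>C2. \<forall>p'\<in>C2. lin p p' \<longleftrightarrow> leP p p'"
    and a: "a \<in> C1" and b: "b \<in> C1" and c: "c \<in> C2" and d: "d \<in> C2"
    and ac: "leP a c \<longleftrightarrow> X" and bd: "leP b d \<longleftrightarrow> X"
  shows "leP (min_wrt lin a b) (min_wrt lin c d) \<longleftrightarrow> X"
proof -
  define m where "m = min_wrt lin a b"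
  define m' where "m' = min_wrt lin c d"
  have M: "m \<in> {a,b}" "leP m a" "leP m b" using min_props[OF po C1 a b] m_def by auto
  have M': "m' \<in> {c,d}" "leP m' c" "leP m' d" using min_props[OF po C2 c d] m'_def by auto
  have tr: "\<And>x y z. x \<in> P \<Longrightarrow> y \<in> P \<Longrightarrow> z \<in> P \<Longrightarrow> leP x y \<Longrightarrow> leP y z \<Longrightarrow> leP x z"
    using po unfolding partial_order_on'_def by blast
  have inP: "a \<in> P" "b \<in> P" "c \<in> P" "d \<in> P" "m \<in> P" "m' \<in> P"
    using a b c d C1 C2 M(1) M'(1) by auto
  show ?thesis unfolding m_def[symmetric] m'_def[symmetric]
  proof
    assume h: "leP m m'"
    have "leP m c" "leP m d" using tr[OF inP(5,6,3) h M'(2)] tr[OF inP(5,6,4) h M'(3)] by auto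
    thus X using M(1) ac bd by auto
  next
    assume X
    hence "leP a c" "leP b d" using ac bd by auto
    hence "leP m c" "leP m d" using tr[OF inP(5,1,3) M(2)] tr[OF inP(5,2,4) M(3)] by auto
    thus "leP m m'" using M'(1) by auto
  qed
qed

theorem lemma3p3:
  fixes Q :: "'q set" and leQ :: "'q \<Rightarrow> 'q \<Rightarrow> bool"
    and P :: "'p set" and leP :: "'p \<Rightarrow> 'p \<Rightarrow> bool"
    and C :: "nat \<Rightarrow> 'p set" and f :: "'q \<Rightarrow> nat"
    and lin :: "'p \<Rightarrow> 'p \<Rightarrow> bool"
  assumes "finite Q" and "partial_order_on' Q leQ"
    and "finite P" and "partial_order_on' P leP"
    and "chain_partition P leP (width P leP) C"
    and "\<forall>q\<in>Q. f q \<in> {1..width P leP}"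
    and "linear_order_on' P lin"
    and "\<forall>i\<in>{1..width P leP}. \<forall>p\<in>C i. \<forall>p'\<in>C i. lin p p' \<longleftrightarrow> leP p p'"
  shows "instance_closed Q leQ leP C f (min_wrt lin)"
proof -
  have CH: "\<And>q. q \<in> Q \<Longrightarrow> C (f q) \<subseteq> P \<and> is_chain leP (C (f q)) \<and>
       (\<forall>p\<in>C (f q). \<forall>p'\<in>C (f q). lin p p' \<longleftrightarrow> leP p p')"
    using assms(5,6,8) unfolding chain_partition_def by blast
  have U: "\<forall>q\<in>Q. closed_under {[p] | p. p \<in> C (f q)} (min_wrt lin)"
    unfolding closed_under_def min_wrt_def by auto
  have B: "closed_under (constr_rel leQ leP C f q q') (min_wrt lin)" if q: "q \<in> Q" "q' \<in> Q" for q q'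
  proof -
    note c1 = CH[OF q(1)] and c2 = CH[OF q(2)]
    show ?thesis unfolding closed_under_def
    proof (intro ballI impI)
      fix t1 t2 assume t1: "t1 \<in> constr_rel leQ leP C f q q'" and t2: "t2 \<in> constr_rel leQ leP C f q q'"
      obtain a c where A: "t1 = [a,c]" "a \<in> C (f q)" "c \<in> C (f q')"
        "leP a c \<longleftrightarrow> leQ q q'" "leP c a \<longleftrightarrow> leQ q' q"
        using t1 unfolding constr_rel_def by blast
      obtain b d where Bd: "t2 = [b,d]" "b \<in> C (f q)" "d \<in> C (f q')"
        "leP b d \<longleftrightarrow> leQ q q'" "leP d b \<longleftrightarrow> leQ q' q"
        using t2 unfolding constr_rel_def by blast
      have k1: "leP (min_wrt lin a b) (min_wrt lin c d) \<longleftrightarrow> leQ q q'"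
        using key[OF assms(4) _ _ _ _ _ _ A(2) Bd(2) A(3) Bd(3) A(4) Bd(4)] c1 c2 by blast
      have k2: "leP (min_wrt lin c d) (min_wrt lin a b) \<longleftrightarrow> leQ q' q"
        using key[OF assms(4) _ _ _ _ _ _ A(3) Bd(3) A(2) Bd(2) A(5) Bd(5)] c1 c2 by blast
      have m1: "min_wrt lin a b \<in> C (f q)" using A(2) Bd(2) unfolding min_wrt_def by auto
      have m2: "min_wrt lin c d \<in> C (f q')" using A(3) Bd(3) unfolding min_wrt_def by auto
      show "map2 (min_wrt lin) t1 t2 \<in> constr_rel leQ leP C f q q'"
        unfolding A(1) Bd(1) constr_rel_def using k1 k2 m1 m2 by auto
    qed
  qed
  show ?thesis unfolding instance_closed_def using U B by blast
qed

end
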